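(* Let $P=\langle p_1,\dots,p_n\rangle$ be a set of points in convex position with positive weights $w_1,\dots,w_n$. For any canonical triple $(i,j,k)$, including the case $k=0$, $$f(i,j,k)=\begin{cases}\max_{p_l\in P_k(i,j)}\bigl(f(i,l,j)+f(l,j,i)+w_l\bigr), & \text{if } P_k(i,j)\neq\emptyset,\\ 0, & \text{otherwise.}\end{cases}$$
   Context: $P$ is in convex position (every point is a hull vertex), no three points collinear, no four cocircular, listed counterclockwise along the hull as the cyclic list $\langle p_1,\dots,p_n\rangle$; $P(i,j)$ denotes the points strictly between $p_i$ and $p_j$ when moving counterclockwise from $p_i$ to $p_j$. An independent set is a subset of $P$ whose pairwise Euclidean distances all exceed $1$. For three points $p,q,s$, $D(p,q,s)$ is the disk whose boundary circle passes through $p,q,s$. A canonical triple $(i,j,k)$ with $k\ne 0$ consists of indices such that $p_i,p_j,p_k$ are in counterclockwise order in $P$ and have pairwise distances greater than $1$; also $(i,j,0)$ is a canonical triple whenever $|p_ip_j|>1$, where $p_0$ is a dummy point and $D(p_i,p_j,p_0)$ is taken to be the halfplane to the left of the directed segment from $p_i$ to $p_j$. For a canonical triple, $P_k(i,j)=\{p\in P(i,j): p\notin D(p_i,p_j,p_k),\ |pp_i|>1,\ |pp_j|>1\}$, and $f(i,j,k)$ is the maximum total weight of a subset $P'\subseteq P(i,j)$ lying outside $D(p_i,p_j,p_k)$ such that $P'\cup\{p_i,p_j\}$ is an independent set (and $0$ if there is no nonempty such subset). *)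

theory Defs
  imports "HOL-Analysis.Analysis"
begin

text \<open>Points live in the Euclidean plane, modelled as \<open>complex\<close>.
  The point set is \<open>p 1, ..., p n\<close> (indices \<open>1..n\<close>); index 0 is the dummy point.\<close>

definition orient :: "complex \<Rightarrow> complex \<Rightarrow> complex \<Rightarrow> real" where
  "orient a b c = Im (cnj (b - a) * (c - a))"

definition cocircular4 :: "complex \<Rightarrow> complex \<Rightarrow> complex \<Rightarrow> complex \<Rightarrow> bool" where
  "cocircular4 a b c d \<longleftrightarrow> (\<exists>z r. dist a z = r \<and> dist b z = r \<and> dist c z = r \<and> dist d z = r)"

definition good_config :: "nat \<Rightarrow> (nat \<Rightarrow> complex) \<Rightarrow> bool" where
  "good_config n p \<longleftrightarrow>
     inj_on p {1..n} \<and>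
     (\<forall>m\<in>{1..n}. p m \<notin> convex hull (p ` ({1..n} - {m}))) \<and>
     (\<forall>a b c. 1 \<le> a \<and> a < b \<and> b < c \<and> c \<le> n \<longrightarrow> orient (p a) (p b) (p c) > 0) \<and>
     (\<forall>a\<in>{1..n}. \<forall>b\<in>{1..n}. \<forall>c\<in>{1..n}. distinct [a,b,c] \<longrightarrow> orient (p a) (p b) (p c) \<noteq> 0) \<and>
     (\<forall>a\<in>{1..n}. \<forall>b\<in>{1..n}. \<forall>c\<in>{1..n}. \<forall>d\<in>{1..n}. distinct [a,b,c,d] \<longrightarrow>
        \<not> cocircular4 (p a) (p b) (p c) (p d))"

definition cyc_ccw :: "nat \<Rightarrow> nat \<Rightarrow> nat \<Rightarrow> bool" where
  "cyc_ccw i j k \<longleftrightarrow> (i < j \<and> j < k) \<or> (j < k \<and> k < i) \<or> (k < i \<and> i < j)"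

definition between :: "nat \<Rightarrow> nat \<Rightarrow> nat \<Rightarrow> nat set" where
  "between n i j = {m \<in> {1..n}. if i < j then i < m \<and> m < j else (i < m \<or> m < j)}"

definition disk3 :: "complex \<Rightarrow> complex \<Rightarrow> complex \<Rightarrow> complex set" where
  "disk3 a b c = {x. \<exists>z r. dist a z = r \<and> dist b z = r \<and> dist c z = r \<and> dist x z \<le> r}"

text \<open>\<open>D(p_i,p_j,p_k)\<close>, with the convention for the dummy point \<open>k = 0\<close>:
  the halfplane to the left of the directed segment from \<open>p_i\<close> to \<open>p_j\<close>.\<close>
definition Dreg :: "(nat \<Rightarrow> complex) \<Rightarrow> nat \<Rightarrow> nat \<Rightarrow> nat \<Rightarrow> complex set" where
  "Dreg p i j k = (if k = 0 then {x. orient (p i) (p j) x > 0} else disk3 (p i) (p j) (p k))"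

definition canonical :: "nat \<Rightarrow> (nat \<Rightarrow> complex) \<Rightarrow> nat \<Rightarrow> nat \<Rightarrow> nat \<Rightarrow> bool" where
  "canonical n p i j k \<longleftrightarrow>
     i \<in> {1..n} \<and> j \<in> {1..n} \<and> dist (p i) (p j) > 1 \<and>
     (k \<noteq> 0 \<longrightarrow> k \<in> {1..n} \<and> cyc_ccw i j k \<and> dist (p j) (p k) > 1 \<and> dist (p i) (p k) > 1)"

definition indep :: "(nat \<Rightarrow> complex) \<Rightarrow> nat set \<Rightarrow> bool" where
  "indep p A \<longleftrightarrow> (\<forall>a\<in>A. \<forall>b\<in>A. p a \<noteq> p b \<longrightarrow> dist (p a) (p b) > 1)"

definition Pk :: "nat \<Rightarrow> (nat \<Rightarrow> complex) \<Rightarrow> nat \<Rightarrow> nat \<Rightarrow> nat \<Rightarrow> nat set" where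
  "Pk n p i j k = {l \<in> between n i j. p l \<notin> Dreg p i j k \<and> dist (p l) (p i) > 1 \<and> dist (p l) (p j) > 1}"

definition fopt :: "nat \<Rightarrow> (nat \<Rightarrow> complex) \<Rightarrow> (nat \<Rightarrow> real) \<Rightarrow> nat \<Rightarrow> nat \<Rightarrow> nat \<Rightarrow> real" where
  "fopt n p w i j k = Max {sum w S | S. S \<subseteq> between n i j \<and> (\<forall>l\<in>S. p l \<notin> Dreg p i j k)
                                    \<and> indep p (S \<union> {i, j})}"

end

theory Submission imports Defs begin

definition inc :: "complex \<Rightarrow> complex \<Rightarrow> complex \<Rightarrow> complex \<Rightarrow> real" where
"inc a b c d = (let ax = Re a - Re d; ay = Im a - Im d; bx = Re b - Re d; by = Im b - Im d;
   cx = Re c - Re d; cy = Im c - Im d in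
   ax*(by*(cx^2+cy^2) - (bx^2+by^2)*cy) - ay*(bx*(cx^2+cy^2) - (bx^2+by^2)*cx) + (ax^2+ay^2)*(bx*cy - by*cx))"

lemma orient_eq: "orient a b c = (Re b - Re a)*(Im c - Im a) - (Im b - Im a)*(Re c - Re a)"
  by (simp add: orient_def algebra_simps)


lemma pluecker: "orient a b c * inc a b d x - orient a b d * inc a b c x + orient a b x * inc a b c d = 0"
  unfolding orient_eq inc_def Let_def by algebra

lemma inc_cyc: "inc b c a x = inc a b c x"
  unfolding inc_def Let_def by algebra
lemma inc_swap: "inc a c b x = - inc a b c x"
  unfolding inc_def Let_def by algebra

lemma inc_q: "Im ((i-x)*(l-j)*cnj((l-x)*(i-j))) = - inc i l j x"
  unfolding inc_def Let_def by (simp add: algebra_simps power2_eq_square)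

definition cc :: "complex \<Rightarrow> complex \<Rightarrow> complex \<Rightarrow> complex" where
"cc a b c = (let ax = Re a; ay = Im a; bx = Re b; by = Im b; cx = Re c; cy = Im c;
   d = 2*(ax*(by-cy)+bx*(cy-ay)+cx*(ay-by)) in
   Complex (((ax*ax+ay*ay)*(by-cy)+(bx*bx+by*by)*(cy-ay)+(cx*cx+cy*cy)*(ay-by))/d)
           (((ax*ax+ay*ay)*(cx-bx)+(bx*bx+by*by)*(ax-cx)+(cx*cx+cy*cy)*(bx-ax))/d))"

lemma circ_id0:
  "inc a b c x + orient a b c * (cmod(x-z)^2 - r2) =
     (cmod(a-z)^2 - r2) * orient b c x - (cmod(b-z)^2 - r2) * orient a c x + (cmod(c-z)^2 - r2) * orient a b x"
  unfolding orient_eq inc_def Let_def cmod_power2 by (simp only: minus_complex.sel) algebra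

lemma circ_id:
  assumes "cmod(a-z)^2 = r2" "cmod(b-z)^2 = r2" "cmod(c-z)^2 = r2"
  shows "inc a b c x = - orient a b c * (cmod(x-z)^2 - r2)"
  using circ_id0[of a b c x z r2] assms by simp

lemma cc_eq:
  assumes "orient a b c \<noteq> 0"
  shows "cmod(b - cc a b c)^2 = cmod(a - cc a b c)^2" "cmod(c - cc a b c)^2 = cmod(a - cc a b c)^2"
proof -
  have d: "2*(Re a*(Im b-Im c)+Re b*(Im c-Im a)+Re c*(Im a-Im b)) \<noteq> 0"
    using assms unfolding orient_eq by (simp add: algebra_simps)
  show "cmod(b - cc a b c)^2 = cmod(a - cc a b c)^2" 
    using d unfolding cc_def Let_def cmod_power2 by (simp add: field_simps) algebra
  show "cmod(c - cc a b c)^2 = cmod(a - cc a b c)^2" 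
    using d unfolding cc_def Let_def cmod_power2 by (simp add: field_simps) algebra
qed
lemma orient_cyc: "orient b c a = orient a b c"
  unfolding orient_eq by algebra
lemma orient_swap: "orient a c b = - orient a b c"
  unfolding orient_eq by algebra

lemma disk_out:
  assumes "orient a b c > 0"
  shows "x \<notin> disk3 a b c \<longleftrightarrow> inc a b c x < 0"
proof
  assume "inc a b c x < 0"
  show "x \<notin> disk3 a b c"
  proof
    assume "x \<in> disk3 a b c"
    then obtain z r where h: "dist a z = r" "dist b z = r" "dist c z = r" "dist x z \<le> r"
      unfolding disk3_def by blast
    have "inc a b c x = - orient a b c * (cmod(x-z)^2 - r^2)"
      by (rule circ_id) (use h in \<open>auto simp: dist_norm\<close>)
    moreover have "cmod(x-z)^2 \<le> r^2" using h(4)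
      by (simp add: dist_norm power_mono)
    ultimately have "inc a b c x \<ge> 0" using assms
      by (simp add: mult_nonneg_nonpos)
    then show False using \<open>inc a b c x < 0\<close> by simp
  qed
next
  assume x: "x \<notin> disk3 a b c"
  define z where "z = cc a b c"
  have e: "cmod(b - z)^2 = cmod(a - z)^2" "cmod(c - z)^2 = cmod(a - z)^2"
    using cc_eq[of a b c] assms unfolding z_def by auto
  have "dist b z = dist a z" "dist c z = dist a z"
    using e by (simp_all add: dist_norm power2_eq_iff_nonneg)
  with x have "\<not> dist x z \<le> dist a z" unfolding disk3_def by blast
  hence "cmod(x-z)^2 > cmod(a-z)^2"
    by (simp add: dist_norm power_strict_mono)
  moreover have "inc a b c x = - orient a b c * (cmod(x-z)^2 - cmod(a-z)^2)"
    by (rule circ_id) (use e in auto)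
  ultimately show "inc a b c x < 0" using assms
    by (simp add: mult_pos_pos)
qed

lemma inc_zero_cocirc:
  assumes "orient a b c \<noteq> 0" "inc a b c x = 0"
  shows "cocircular4 a b c x"
proof -
  define z where "z = cc a b c"
  have e: "cmod(b - z)^2 = cmod(a - z)^2" "cmod(c - z)^2 = cmod(a - z)^2"
    using cc_eq[of a b c] assms unfolding z_def by auto
  have "inc a b c x = - orient a b c * (cmod(x-z)^2 - cmod(a-z)^2)"
    by (rule circ_id) (use e in auto)
  with assms have "cmod(x-z)^2 = cmod(a-z)^2" by simp
  with e have "dist b z = dist a z" "dist c z = dist a z" "dist x z = dist a z"
    by (simp_all add: dist_norm power2_eq_iff_nonneg)
  then show ?thesis unfolding cocircular4_def by blast
qed

definition ang :: "complex \<Rightarrow> complex \<Rightarrow> complex \<Rightarrow> real" where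
  "ang v a b = Arg ((a - v) / (b - v))"

lemma Im_div_orient: "Im ((a - v) / (b - v)) = orient a v b / ((Re (b-v))^2 + (Im (b-v))^2)"
  unfolding Im_divide orient_eq by (simp add: algebra_simps)

lemma ang_pos:
  assumes "orient a v b > 0"
  shows "0 < ang v a b" "ang v a b < pi"
proof -
  have "b \<noteq> v" using assms unfolding orient_eq by auto
  hence "(Re (b-v))^2 + (Im (b-v))^2 > 0"
    by (metis complex_eq_iff right_minus_eq sum_power2_gt_zero_iff zero_complex.sel(1) zero_complex.sel(2))
  hence "Im ((a - v) / (b - v)) > 0" using assms Im_div_orient by simp
  then show "0 < ang v a b" "ang v a b < pi" unfolding ang_def using Arg_lt_pi by blast+
qed

lemma nz_of_orient: "orient a v b > 0 \<Longrightarrow> (a - v) / (b - v) \<noteq> 0"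
  unfolding orient_eq by auto

lemma ang_add:
  assumes "orient a v m > 0" "orient m v b > 0" "orient a v b > 0"
  shows "ang v a b = ang v a m + ang v m b"
proof -
  have "m \<noteq> v" using assms(2) unfolding orient_eq by auto
  hence eq: "(a - v) / (b - v) = ((a - v) / (m - v)) * ((m - v) / (b - v))"
    by simp
  have nz: "(a - v) / (m - v) \<noteq> 0" "(m - v) / (b - v) \<noteq> 0"
    using nz_of_orient assms by auto
  note A = Arg_times'[OF nz]
  note p1 = ang_pos[OF assms(1)] and p2 = ang_pos[OF assms(2)] and p3 = ang_pos[OF assms(3)]
  show ?thesis using A p1 p2 p3 unfolding ang_def eq[symmetric]
    by (auto split: if_splits)
qed

lemma ang_tri:
  assumes "orient a b c > 0"
  shows "ang a c b + ang b a c + ang c b a = pi"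
proof -
  have o1: "orient c a b > 0" "orient a b c > 0" "orient b c a > 0"
    using assms by (auto simp: orient_cyc)
  have ne: "a \<noteq> b" "b \<noteq> c" "a \<noteq> c" using assms unfolding orient_eq by auto
  have eq: "((c-a)/(b-a)) * ((a-b)/(c-b)) * ((b-c)/(a-c)) = -1"
  proof -
    define Dn where "Dn = (b-a)*(c-b)*(a-c)"
    have "Dn \<noteq> 0" using ne unfolding Dn_def by auto
    have "((c-a)/(b-a)) * ((a-b)/(c-b)) * ((b-c)/(a-c)) = ((c-a)*(a-b)*(b-c)) / Dn"
      unfolding Dn_def by simp
    also have "(c-a)*(a-b)*(b-c) = - Dn" unfolding Dn_def by (simp add: algebra_simps)
    finally show ?thesis using \<open>Dn \<noteq> 0\<close> by simp
  qed
  have nz: "(c-a)/(b-a) \<noteq> 0" "(a-b)/(c-b) \<noteq> 0" "(b-c)/(a-c) \<noteq> 0" using ne by auto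
  have nz2: "((c-a)/(b-a)) * ((a-b)/(c-b)) \<noteq> 0" using nz by auto
  note A1 = Arg_times'[OF nz(1) nz(2)]
  note A2 = Arg_times'[OF nz2 nz(3)]
  have "Arg (-1) = pi" using Arg_of_real[of "-1"] by simp
  note p1 = ang_pos[OF o1(1)] and p2 = ang_pos[OF o1(2)] and p3 = ang_pos[OF o1(3)]
  show ?thesis using A1 A2 eq p1 p2 p3 \<open>Arg (-1) = pi\<close> unfolding ang_def
    by (auto split: if_splits)
qed

lemma ang_quad:
  assumes "orient a b c > 0" "orient a c d > 0" "orient a b d > 0" "orient b c d > 0"
  shows "ang a d b + ang b a c + ang c b d + ang d c a = 2*pi"
proof -
  have t1: "ang a c b + ang b a c + ang c b a = pi" by (rule ang_tri[OF assms(1)])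
  have t2: "ang a d c + ang c a d + ang d c a = pi" by (rule ang_tri[OF assms(2)])
  have s1: "ang a d b = ang a d c + ang a c b"
    by (rule ang_add) (use assms in \<open>simp_all add: orient_cyc\<close>)
  have s2: "ang c b d = ang c b a + ang c a d"
    by (rule ang_add) (use assms in \<open>simp_all add: orient_cyc\<close>)
  show ?thesis using t1 t2 s1 s2 by simp
qed

lemma ang_cos:
  assumes "orient a v b > 0" "dist a v > 1" "dist b v > 1" "dist a b \<le> 1"
  shows "ang v a b < pi/3"
proof (rule ccontr)
  assume "\<not> ang v a b < pi/3"
  hence c: "cos (ang v a b) \<le> 1/2"
    using ang_pos[OF assms(1)] cos_mono_le_eq[of "ang v a b" "pi/3"] cos_60 by simp
  define z where "z = (a - v) / (b - v)"
  have nz: "z \<noteq> 0" using nz_of_orient[OF assms(1)] z_def by simp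
  define A where "A = cmod (a - v)"
  define B where "B = cmod (b - v)"
  define D where "D = Re ((a - v) * cnj (b - v))"
  have A1: "A > 1" "B > 1" using assms by (simp_all add: A_def B_def dist_norm)
  have "cmod (a - b)^2 = A^2 + B^2 - 2*D"
    unfolding A_def B_def D_def cmod_power2 by (simp add: algebra_simps power2_eq_square)
  moreover have "cmod (a - b)^2 \<le> 1" using assms(4) by (simp add: dist_norm power_le_one)
  ultimately have D: "2*D \<ge> A^2 + B^2 - 1" by simp
  have "A*B > 1" using A1 by (metis less_1_mult)
  have "(A - B)^2 \<ge> 0" by simp
  hence "2*D > A*B" using D \<open>A*B > 1\<close> by (simp add: power2_eq_square algebra_simps)
  have "Re z = D / B^2"
    unfolding z_def D_def B_def Re_divide cmod_power2 by (simp add: algebra_simps)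
  moreover have "cmod z = A / B" unfolding z_def A_def B_def by (simp add: norm_divide)
  ultimately have "cos (ang v a b) = (D / B^2) / (A / B)"
    using cos_Arg[OF nz] unfolding ang_def z_def by simp
  also have "\<dots> = D / (A * B)" using A1 by (simp add: field_simps power2_eq_square)
  finally have "cos (ang v a b) = D / (A*B)" .
  moreover have "D / (A*B) > 1/2" using \<open>2*D > A*B\<close> A1
    by (simp add: field_simps)
  ultimately show False using c by simp
qed

lemma ang_inscr:
  assumes "orient i x l > 0" "orient i l j > 0" "inc i l j x < 0"
  shows "ang x i l + ang j l i < pi"
proof -
  have o2: "orient l j i > 0" using assms(2) by (simp add: orient_cyc)
  have nz: "(i-x)/(l-x) \<noteq> 0" "(l-j)/(i-j) \<noteq> 0" using nz_of_orient assms(1) o2 by auto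
  have ne: "l \<noteq> x" "i \<noteq> j" using assms(1,2) unfolding orient_eq by auto
  define N where "N = (i-x)*(l-j)"
  define W where "W = (l-x)*(i-j)"
  have W: "W \<noteq> 0" using ne unfolding W_def by auto
  have eq: "(i-x)/(l-x) * ((l-j)/(i-j)) = N / W" unfolding N_def W_def by simp
  have "Im (N * cnj W) > 0" using inc_q[of i x l j] assms(3) unfolding N_def W_def by simp
  moreover have "Im (N * cnj W) = Im N * Re W - Re N * Im W" by simp
  moreover have "(Re W)^2 + (Im W)^2 > 0" using W
    by (metis complex_eq_iff sum_power2_gt_zero_iff zero_complex.sel(1) zero_complex.sel(2))
  ultimately have "Im (N / W) > 0" unfolding Im_divide by simp
  hence "0 < Arg (N/W)" "Arg (N/W) < pi" using Arg_lt_pi by blast+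
  note A = Arg_times'[OF nz]
  note p1 = ang_pos[OF assms(1)] and p2 = ang_pos[OF o2]
  show ?thesis using A p1 p2 \<open>0 < Arg (N/W)\<close> \<open>Arg (N/W) < pi\<close> unfolding ang_def eq
    by (auto split: if_splits)
qed

lemma far_opp:
  assumes o: "orient I X L > 0" "orient I X J > 0" "orient I L J > 0" "orient X L J > 0"
    and inc: "inc I L J X < 0"
    and d: "dist X I > 1" "dist X L > 1" "dist I J > 1" "dist L J > 1"
  shows "dist X J > 1"
proof (rule ccontr)
  assume "\<not> dist X J > 1"
  hence dj: "dist X J \<le> 1" by simp
  have q: "ang I J X + ang X I L + ang L X J + ang J L I = 2*pi"
    by (rule ang_quad) (use o in auto)
  have s: "ang X I L + ang J L I < pi" by (rule ang_inscr[OF o(1) o(3) inc])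
  have c1: "ang I J X < pi/3"
    by (rule ang_cos; metis o d dj orient_cyc dist_commute)
  have c2: "ang L X J < pi/3"
    by (rule ang_cos; metis o d dj orient_cyc dist_commute)
  show False using q s c1 c2 pi_gt_zero by linarith
qed

lemma far_two:
  assumes o: "orient I X L > 0" "orient I L Y > 0" "orient I X Y > 0" "orient X L Y > 0"
     "orient I L J > 0" "orient I Y J > 0" "orient L Y J > 0"
    and inc: "inc I L J X < 0" "inc I L J Y < 0"
    and d: "dist X I > 1" "dist X L > 1" "dist Y I > 1" "dist Y L > 1"
  shows "dist X Y > 1"
proof (rule ccontr)
  assume "\<not> dist X Y > 1"
  hence dxy: "dist X Y \<le> 1" by simp
  have q: "ang I Y X + ang X I L + ang L X Y + ang Y L I = 2*pi"
    by (rule ang_quad) (use o in auto)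
  have c1: "ang I Y X < pi/3"
    by (rule ang_cos; metis o d dxy orient_cyc dist_commute)
  have c2: "ang L X Y < pi/3"
    by (rule ang_cos; metis o d dxy orient_cyc dist_commute)
  have a1: "ang Y L J = ang Y L I + ang Y I J"
    by (rule ang_add; metis o orient_cyc)
  have p1: "ang Y I J > 0" by (rule ang_pos; metis o orient_cyc)
  have s1: "ang X I L + ang J L I < pi" by (rule ang_inscr[OF o(1) o(5) inc(1)])
  have s2: "ang Y L J + ang I J L < pi"
    by (rule ang_inscr; metis o inc orient_cyc inc_cyc)
  have t: "ang I J L + ang L I J + ang J L I = pi" by (rule ang_tri[OF o(5)])
  have a2: "ang L X Y = ang L X I + ang L I Y"
    by (rule ang_add; metis o orient_cyc)
  have a3: "ang L I Y = ang L I J + ang L J Y"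
    by (rule ang_add; metis o orient_cyc)
  have p2: "ang L X I > 0" by (rule ang_pos; metis o orient_cyc)
  have p3: "ang L J Y > 0" by (rule ang_pos; metis o orient_cyc)
  show False using q c1 c2 a1 p1 s1 s2 t a2 a3 p2 p3 pi_gt_zero by linarith
qed

lemma nest:
  assumes "orient I J K > 0" "orient I J L < 0" "orient I J X < 0"
    "inc I J K L < 0" "inc I L J X < 0"
  shows "inc I J K X < 0"
proof -
  have h: "inc I J L X > 0" using assms(5) inc_swap[of I J L X] by simp
  have pl: "orient I J K * inc I J L X - orient I J L * inc I J K X + orient I J X * inc I J K L = 0"
    by (rule pluecker)
  have "orient I J K * inc I J L X > 0" using assms(1) h by simp
  moreover have "orient I J X * inc I J K L > 0" using assms(3,4) by (simp add: mult_neg_neg)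
  ultimately have "orient I J L * inc I J K X > 0" using pl by linarith
  with assms(2) show ?thesis by (simp add: zero_less_mult_iff)
qed

definition gsel :: "complex \<Rightarrow> complex \<Rightarrow> complex \<Rightarrow> complex \<Rightarrow> real" where
  "gsel I J C m = inc I J C m / (orient I J C * orient I J m)"

lemma gsel_diff:
  assumes "orient I J C \<noteq> 0" "orient I J L \<noteq> 0" "orient I J M \<noteq> 0"
  shows "inc I J L M / (orient I J L * orient I J M) = gsel I J C M - gsel I J C L"
proof -
  have pl: "orient I J C * inc I J L M - orient I J L * inc I J C M + orient I J M * inc I J C L = 0"
    by (rule pluecker)
  show ?thesis using assms pl unfolding gsel_def
    by (simp add: field_simps)
qed

lemma ori:
  assumes "good_config n p" "a \<in> {1..n}" "b \<in> {1..n}" "c \<in> {1..n}" "cyc_ccw a b c"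
  shows "orient (p a) (p b) (p c) > 0"
proof -
  have G: "\<And>a b c. 1 \<le> a \<Longrightarrow> a < b \<Longrightarrow> b < c \<Longrightarrow> c \<le> n \<Longrightarrow> orient (p a) (p b) (p c) > 0"
    using assms(1) unfolding good_config_def by blast
  from assms(5) consider "a < b \<and> b < c" | "b < c \<and> c < a" | "c < a \<and> a < b"
    unfolding cyc_ccw_def by blast
  then show ?thesis
  proof cases
    case 1 then show ?thesis using G assms(2-4) by auto
  next
    case 2 then have "orient (p b) (p c) (p a) > 0" using G assms(2-4) by auto
    then show ?thesis by (simp add: orient_cyc)
  next
    case 3 then have "orient (p c) (p a) (p b) > 0" using G assms(2-4) by auto
    then show ?thesis by (metis orient_cyc)
  qed
qed

lemma between_iff:
  assumes "i \<noteq> j"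
  shows "m \<in> between n i j \<longleftrightarrow> m \<in> {1..n} \<and> cyc_ccw i m j"
  using assms unfolding between_def cyc_ccw_def by auto

lemma inj_p:
  assumes "good_config n p" "a \<in> {1..n}" "b \<in> {1..n}" "a \<noteq> b"
  shows "p a \<noteq> p b"
  using assms unfolding good_config_def inj_on_def by blast

lemma indep_dist:
  assumes "good_config n p" "indep p A" "A \<subseteq> {1..n}" "a \<in> A" "b \<in> A" "a \<noteq> b"
  shows "dist (p a) (p b) > 1"
  using assms inj_p[OF assms(1)] unfolding indep_def by blast

lemma indep_mono: "indep p B \<Longrightarrow> A \<subseteq> B \<Longrightarrow> indep p A"
  unfolding indep_def by blast

definition feas :: "nat \<Rightarrow> (nat \<Rightarrow> complex) \<Rightarrow> nat \<Rightarrow> nat \<Rightarrow> nat \<Rightarrow> nat set \<Rightarrow> bool" where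
  "feas n p i j k S \<longleftrightarrow> S \<subseteq> between n i j \<and> (\<forall>l\<in>S. p l \<notin> Dreg p i j k) \<and> indep p (S \<union> {i, j})"

lemma fopt_alt: "fopt n p w i j k = Max (sum w ` {S. feas n p i j k S})"
proof -
  have "{sum w S | S. S \<subseteq> between n i j \<and> (\<forall>l\<in>S. p l \<notin> Dreg p i j k) \<and> indep p (S \<union> {i, j})}
        = sum w ` {S. feas n p i j k S}" unfolding feas_def by blast
  then show ?thesis unfolding fopt_def by simp
qed

lemma between_sub: "between n i j \<subseteq> {1..n}" unfolding between_def by auto

lemma feas_finite: "finite {S. feas n p i j k S}"
proof -
  have "{S. feas n p i j k S} \<subseteq> Pow (between n i j)" unfolding feas_def by auto
  moreover have "finite (Pow (between n i j))"
    using between_sub finite_subset by (metis finite_Pow_iff finite_atLeastAtMost)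
  ultimately show ?thesis using finite_subset by blast
qed

lemma feas_empty: "dist (p i) (p j) > 1 \<Longrightarrow> feas n p i j k {}"
  unfolding feas_def indep_def by (auto simp: dist_commute)

lemma fopt_ge: "dist (p i) (p j) > 1 \<Longrightarrow> feas n p i j k S \<Longrightarrow> sum w S \<le> fopt n p w i j k"
  unfolding fopt_alt by (rule Max_ge) (use feas_finite in auto)

lemma fopt_obtain:
  assumes "dist (p i) (p j) > 1"
  obtains S where "feas n p i j k S" "fopt n p w i j k = sum w S"
proof -
  have "fopt n p w i j k \<in> sum w ` {S. feas n p i j k S}"
    unfolding fopt_alt by (rule Max_in) (use feas_finite feas_empty[OF assms] in blast)+
  then show ?thesis using that by auto
qed

lemma fopt_nonneg: "dist (p i) (p j) > 1 \<Longrightarrow> fopt n p w i j k \<ge> 0"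
  using fopt_ge[of p i j n k "{}" w] feas_empty by simp

lemma Dreg_disk: "c \<noteq> 0 \<Longrightarrow> Dreg p a b c = disk3 (p a) (p b) (p c)"
  unfolding Dreg_def by simp

lemma canon_facts:
  assumes "canonical n p i j k"
  shows "i \<in> {1..n}" "j \<in> {1..n}" "dist (p i) (p j) > 1" "i \<noteq> j"
  using assms unfolding canonical_def by auto

lemma out_lemma:
  assumes G: "good_config n p" and C: "canonical n p i j k"
    and l: "l \<in> {1..n}" "cyc_ccw i l j" "p l \<notin> Dreg p i j k"
    and z: "z \<in> {1..n}" "cyc_ccw i z j" "inc (p i) (p l) (p j) (p z) < 0"
  shows "p z \<notin> Dreg p i j k"
proof -
  note cf = canon_facts[OF C]
  have oz: "orient (p i) (p j) (p z) < 0"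
    using ori[OF G cf(1) z(1) cf(2) z(2)] orient_swap[of "p i" "p z" "p j"] by simp
  show ?thesis
  proof (cases "k = 0")
    case True then show ?thesis using oz unfolding Dreg_def by simp
  next
    case False
    have k: "k \<in> {1..n}" "cyc_ccw i j k" using C False unfolding canonical_def by auto
    have ok: "orient (p i) (p j) (p k) > 0" by (rule ori[OF G cf(1) cf(2) k])
    have ol: "orient (p i) (p j) (p l) < 0"
      using ori[OF G cf(1) l(1) cf(2) l(2)] orient_swap[of "p i" "p l" "p j"] by simp
    have il: "inc (p i) (p j) (p k) (p l) < 0"
      using l(3) disk_out[OF ok] Dreg_disk[OF False] by simp
    have "inc (p i) (p j) (p k) (p z) < 0" by (rule nest[OF ok ol oz il z(3)])
    then show ?thesis using disk_out[OF ok] Dreg_disk[OF False] by simp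
  qed
qed

lemma combine:
  assumes G: "good_config n p" and C: "canonical n p i j k" and l: "l \<in> Pk n p i j k"
  shows "fopt n p w i l j + fopt n p w l j i + w l \<le> fopt n p w i j k"
proof -
  note cf = canon_facts[OF C]
  have lb: "l \<in> {1..n}" "cyc_ccw i l j" "p l \<notin> Dreg p i j k"
    "dist (p l) (p i) > 1" "dist (p l) (p j) > 1"
    using l between_iff[OF cf(4)] unfolding Pk_def by auto
  have il: "i \<noteq> l" "l \<noteq> j" using lb(2) unfolding cyc_ccw_def by auto
  have dil: "dist (p i) (p l) > 1" using lb(4) by (simp add: dist_commute)
  obtain S1 where S1: "feas n p i l j S1" "fopt n p w i l j = sum w S1"
    using fopt_obtain[OF dil] by metis
  obtain S2 where S2: "feas n p l j i S2" "fopt n p w l j i = sum w S2"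
    using fopt_obtain[OF lb(5)] by metis
  have j0: "j \<noteq> 0" "i \<noteq> 0" using cf by auto
  have S1b: "\<And>x. x \<in> S1 \<Longrightarrow> x \<in> {1..n} \<and> cyc_ccw i x l"
    using S1(1) between_iff[OF il(1)] unfolding feas_def by blast
  have S2b: "\<And>y. y \<in> S2 \<Longrightarrow> y \<in> {1..n} \<and> cyc_ccw l y j"
    using S2(1) between_iff[OF il(2)] unfolding feas_def by blast
  have oilj: "orient (p i) (p l) (p j) > 0" by (rule ori[OF G cf(1) lb(1) cf(2) lb(2)])
  have olji: "orient (p l) (p j) (p i) > 0" using oilj by (simp add: orient_cyc)
  have incx: "inc (p i) (p l) (p j) (p x) < 0" if "x \<in> S1" for x
    using S1(1) that disk_out[OF oilj] Dreg_disk[OF j0(1)] unfolding feas_def by auto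
  have incy: "inc (p i) (p l) (p j) (p y) < 0" if "y \<in> S2" for y
  proof -
    have "inc (p l) (p j) (p i) (p y) < 0"
      using S2(1) that disk_out[OF olji] Dreg_disk[OF j0(2)] unfolding feas_def by auto
    then show ?thesis by (simp add: inc_cyc)
  qed
  have ind1: "indep p (S1 \<union> {i, l})" and ind2: "indep p (S2 \<union> {l, j})"
    using S1(1) S2(1) unfolding feas_def by auto
  have sub1: "S1 \<union> {i, l} \<subseteq> {1..n}" using S1b cf lb by auto
  have sub2: "S2 \<union> {l, j} \<subseteq> {1..n}" using S2b cf lb by auto
  have dx: "dist (p x) (p i) > 1 \<and> dist (p x) (p l) > 1" if "x \<in> S1" for x
  proof -
    have "x \<noteq> i" "x \<noteq> l" using S1b[OF that] unfolding cyc_ccw_def by auto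
    then show ?thesis using indep_dist[OF G ind1 sub1] that by auto
  qed
  have dy: "dist (p y) (p l) > 1 \<and> dist (p y) (p j) > 1" if "y \<in> S2" for y
  proof -
    have "y \<noteq> j" "y \<noteq> l" using S2b[OF that] unfolding cyc_ccw_def by auto
    then show ?thesis using indep_dist[OF G ind2 sub2] that by auto
  qed
  have dyi: "dist (p y) (p i) > 1" if y: "y \<in> S2" for y
  proof -
    have c: "cyc_ccw l y j" "y \<in> {1..n}" using S2b[OF y] by auto
    show ?thesis
    proof (rule far_opp)
      show "orient (p l) (p y) (p j) > 0" by (rule ori[OF G lb(1) c(2) cf(2) c(1)])
      show "orient (p l) (p y) (p i) > 0"
        by (rule ori[OF G lb(1) c(2) cf(1)]) (use c(1) lb(2) in \<open>auto simp: cyc_ccw_def\<close>)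
      show "orient (p l) (p j) (p i) > 0" by (rule olji)
      show "orient (p y) (p j) (p i) > 0"
        by (rule ori[OF G c(2) cf(2) cf(1)]) (use c(1) lb(2) in \<open>auto simp: cyc_ccw_def\<close>)
      show "inc (p l) (p j) (p i) (p y) < 0" using incy[OF y] by (simp add: inc_cyc)
      show "dist (p y) (p l) > 1" "dist (p y) (p j) > 1" using dy[OF y] by auto
      show "dist (p l) (p i) > 1" by (rule lb(4))
      show "dist (p j) (p i) > 1" using cf(3) by (simp add: dist_commute)
    qed
  qed
  have dxj: "dist (p x) (p j) > 1" if x: "x \<in> S1" for x
  proof -
    have c: "cyc_ccw i x l" "x \<in> {1..n}" using S1b[OF x] by auto
    show ?thesis
    proof (rule far_opp)
      show "orient (p i) (p x) (p l) > 0" by (rule ori[OF G cf(1) c(2) lb(1) c(1)])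
      show "orient (p i) (p x) (p j) > 0"
        by (rule ori[OF G cf(1) c(2) cf(2)]) (use c(1) lb(2) in \<open>auto simp: cyc_ccw_def\<close>)
      show "orient (p i) (p l) (p j) > 0" by (rule oilj)
      show "orient (p x) (p l) (p j) > 0"
        by (rule ori[OF G c(2) lb(1) cf(2)]) (use c(1) lb(2) in \<open>auto simp: cyc_ccw_def\<close>)
      show "inc (p i) (p l) (p j) (p x) < 0" by (rule incx[OF x])
      show "dist (p x) (p i) > 1" "dist (p x) (p l) > 1" using dx[OF x] by auto
      show "dist (p i) (p j) > 1" by (rule cf(3))
      show "dist (p l) (p j) > 1" by (rule lb(5))
    qed
  qed
  have dxy: "dist (p x) (p y) > 1" if x: "x \<in> S1" and y: "y \<in> S2" for x y
  proof -
    have c: "cyc_ccw i x l" "x \<in> {1..n}" using S1b[OF x] by auto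
    have d: "cyc_ccw l y j" "y \<in> {1..n}" using S2b[OF y] by auto
    show ?thesis
    proof (rule far_two)
      show "orient (p i) (p x) (p l) > 0" by (rule ori[OF G cf(1) c(2) lb(1) c(1)])
      show "orient (p i) (p l) (p y) > 0"
        by (rule ori[OF G cf(1) lb(1) d(2)]) (use c(1) d(1) lb(2) in \<open>auto simp: cyc_ccw_def\<close>)
      show "orient (p i) (p x) (p y) > 0"
        by (rule ori[OF G cf(1) c(2) d(2)]) (use c(1) d(1) lb(2) in \<open>auto simp: cyc_ccw_def\<close>)
      show "orient (p x) (p l) (p y) > 0"
        by (rule ori[OF G c(2) lb(1) d(2)]) (use c(1) d(1) lb(2) in \<open>auto simp: cyc_ccw_def\<close>)
      show "orient (p i) (p l) (p j) > 0" by (rule oilj)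
      show "orient (p i) (p y) (p j) > 0"
        by (rule ori[OF G cf(1) d(2) cf(2)]) (use c(1) d(1) lb(2) in \<open>auto simp: cyc_ccw_def\<close>)
      show "orient (p l) (p y) (p j) > 0" by (rule ori[OF G lb(1) d(2) cf(2) d(1)])
      show "inc (p i) (p l) (p j) (p x) < 0" by (rule incx[OF x])
      show "inc (p i) (p l) (p j) (p y) < 0" by (rule incy[OF y])
      show "dist (p x) (p i) > 1" "dist (p x) (p l) > 1" using dx[OF x] by auto
      show "dist (p y) (p i) > 1" by (rule dyi[OF y])
      show "dist (p y) (p l) > 1" using dy[OF y] by auto
    qed
  qed
  define T where "T = S1 \<union> S2 \<union> {l}"
  have cross: "dist (p a) (p b) > 1" if "a \<in> S1 \<union> {i}" "b \<in> S2 \<union> {j}" for a b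
    using that dxy dxj dyi cf(3) by (auto simp: dist_commute)
  have indT: "indep p (T \<union> {i, j})"
    unfolding indep_def
  proof (intro ballI impI)
    fix a b assume ab: "a \<in> T \<union> {i, j}" "b \<in> T \<union> {i, j}" "p a \<noteq> p b"
    hence "a \<noteq> b" by auto
    have A: "a \<in> S1 \<union> {i, l} \<or> a \<in> S2 \<union> {l, j}" "b \<in> S1 \<union> {i, l} \<or> b \<in> S2 \<union> {l, j}"
      using ab unfolding T_def by auto
    show "dist (p a) (p b) > 1"
    proof -
      { assume "a \<in> S1 \<union> {i, l}" "b \<in> S1 \<union> {i, l}"
        hence ?thesis using indep_dist[OF G ind1 sub1] \<open>a \<noteq> b\<close> by blast }
      moreover
      { assume "a \<in> S2 \<union> {l, j}" "b \<in> S2 \<union> {l, j}"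
        hence ?thesis using indep_dist[OF G ind2 sub2] \<open>a \<noteq> b\<close> by blast }
      moreover
      { assume "a \<in> S1 \<union> {i}" "b \<in> S2 \<union> {j}"
        hence ?thesis using cross by blast }
      moreover
      { assume "b \<in> S1 \<union> {i}" "a \<in> S2 \<union> {j}"
        hence ?thesis using cross by (metis dist_commute) }
      ultimately show ?thesis using A by blast
    qed
  qed
  have Tsub: "T \<subseteq> between n i j"
  proof
    fix x assume "x \<in> T"
    then consider "x \<in> S1" | "x \<in> S2" | "x = l" unfolding T_def by blast
    then show "x \<in> between n i j"
    proof cases
      case 1 then show ?thesis using S1b[OF 1] lb(2) between_iff[OF cf(4)]
        by (auto simp: cyc_ccw_def)
    next
      case 2 then show ?thesis using S2b[OF 2] lb(2) between_iff[OF cf(4)]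
        by (auto simp: cyc_ccw_def)
    next
      case 3 then show ?thesis using lb between_iff[OF cf(4)] by auto
    qed
  qed
  have Tout: "\<forall>x\<in>T. p x \<notin> Dreg p i j k"
  proof
    fix x assume "x \<in> T"
    then consider "x \<in> S1" | "x \<in> S2" | "x = l" unfolding T_def by blast
    then show "p x \<notin> Dreg p i j k"
    proof cases
      case 1 then show ?thesis
        using out_lemma[OF G C lb(1) lb(2) lb(3)] S1b[OF 1] incx[OF 1] lb(2)
        by (auto simp: cyc_ccw_def)
    next
      case 2 then show ?thesis
        using out_lemma[OF G C lb(1) lb(2) lb(3)] S2b[OF 2] incy[OF 2] lb(2)
        by (auto simp: cyc_ccw_def)
    next
      case 3 then show ?thesis using lb by auto
    qed
  qed
  have fT: "feas n p i j k T" unfolding feas_def using Tsub Tout indT by blast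
  have fin1: "finite S1" using sub1 finite_subset[of S1 "{1..n}"] by auto
  have fin2: "finite S2" using sub2 finite_subset[of S2 "{1..n}"] by auto
  have disj: "S1 \<inter> S2 = {}"
    using S1b S2b lb(2) by (fastforce simp: cyc_ccw_def)
  have lS: "l \<notin> S1 \<union> S2" using S1b S2b by (fastforce simp: cyc_ccw_def)
  have "sum w T = sum w S1 + sum w S2 + w l"
    unfolding T_def using fin1 fin2 disj lS by (simp add: sum.union_disjoint)
  then show ?thesis using fopt_ge[OF cf(3) fT, of w] S1(2) S2(2) by simp
qed

lemma Pk_facts:
  assumes C: "canonical n p i j k" and l: "l \<in> Pk n p i j k"
  shows "l \<in> {1..n}" "cyc_ccw i l j" "p l \<notin> Dreg p i j k"
    "dist (p i) (p l) > 1" "dist (p l) (p j) > 1"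
  using l between_iff[OF canon_facts(4)[OF C]] unfolding Pk_def by (auto simp: dist_commute)

lemma split_lemma:
  assumes G: "good_config n p" and C: "canonical n p i j k"
    and fS: "feas n p i j k S" and ne: "S \<noteq> {}"
  shows "\<exists>l\<in>Pk n p i j k. sum w S \<le> fopt n p w i l j + fopt n p w l j i + w l"
proof -
  note cf = canon_facts[OF C]
  have Sb: "\<And>x. x \<in> S \<Longrightarrow> x \<in> {1..n} \<and> cyc_ccw i x j"
    using fS between_iff[OF cf(4)] unfolding feas_def by blast
  have subS: "S \<union> {i, j} \<subseteq> {1..n}" using Sb cf by auto
  have finS: "finite S" using subS finite_subset[of S "{1..n}"] by auto
  have indS: "indep p (S \<union> {i, j})" using fS unfolding feas_def by blast
  have outS: "\<forall>x\<in>S. p x \<notin> Dreg p i j k" using fS unfolding feas_def by blast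
  define c0 where "c0 = p i + \<i> * (p j - p i)"
  have pij: "p i \<noteq> p j" using cf(3) by auto
  have oc0: "orient (p i) (p j) c0 \<noteq> 0"
  proof -
    have "orient (p i) (p j) c0 = (Re (p j) - Re (p i))^2 + (Im (p j) - Im (p i))^2"
      unfolding orient_eq c0_def by (simp add: power2_eq_square algebra_simps)
    moreover have "(Re (p j) - Re (p i))^2 + (Im (p j) - Im (p i))^2 \<noteq> 0"
      using pij by (auto simp: complex_eq_iff)
    ultimately show ?thesis by simp
  qed
  define g where "g m = gsel (p i) (p j) c0 (p m)" for m
  have "Min (g ` S) \<in> g ` S" using Min_in[of "g ` S"] finS ne by auto
  then obtain l where lS: "l \<in> S" and lmin: "g l = Min (g ` S)" by (metis imageE)
  have gmin: "\<And>m. m \<in> S \<Longrightarrow> g l \<le> g m" using lmin finS by simp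
  have lb: "l \<in> {1..n}" "cyc_ccw i l j" using Sb[OF lS] by auto
  have il: "i \<noteq> l" "l \<noteq> j" using lb(2) unfolding cyc_ccw_def by auto
  have dli: "dist (p l) (p i) > 1" "dist (p l) (p j) > 1"
    using indep_dist[OF G indS subS] lS il by auto
  have lPk: "l \<in> Pk n p i j k"
    unfolding Pk_def using lb between_iff[OF cf(4)] outS lS dli by auto
  have oilj: "orient (p i) (p l) (p j) > 0" by (rule ori[OF G cf(1) lb(1) cf(2) lb(2)])
  have olji: "orient (p l) (p j) (p i) > 0" using oilj by (simp add: orient_cyc)
  have key: "inc (p i) (p l) (p j) (p m) < 0" if m: "m \<in> S" "m \<noteq> l" for m
  proof (rule ccontr)
    assume "\<not> inc (p i) (p l) (p j) (p m) < 0"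
    hence ge: "inc (p i) (p l) (p j) (p m) \<ge> 0" by simp
    have mb: "m \<in> {1..n}" "cyc_ccw i m j" using Sb[OF m(1)] by auto
    show False
    proof (cases "inc (p i) (p l) (p j) (p m) = 0")
      case True
      have "cocircular4 (p i) (p l) (p j) (p m)"
        by (rule inc_zero_cocirc) (use oilj True in auto)
      moreover have "distinct [i, l, j, m]" using lb(2) mb(2) m(2) by (auto simp: cyc_ccw_def)
      ultimately show False using G cf(1,2) lb(1) mb(1) unfolding good_config_def by blast
    next
      case False
      hence pos: "inc (p i) (p l) (p j) (p m) > 0" using ge by simp
      have neg: "inc (p i) (p j) (p l) (p m) < 0"
        using pos inc_swap[of "p i" "p l" "p j" "p m"] by simp
      have ol: "orient (p i) (p j) (p l) < 0"
        using oilj orient_swap[of "p i" "p l" "p j"] by simp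
      have om: "orient (p i) (p j) (p m) < 0"
        using ori[OF G cf(1) mb(1) cf(2) mb(2)] orient_swap[of "p i" "p m" "p j"] by simp
      have "inc (p i) (p j) (p l) (p m) / (orient (p i) (p j) (p l) * orient (p i) (p j) (p m)) < 0"
        using neg ol om by (simp add: divide_neg_pos mult_neg_neg)
      moreover have "inc (p i) (p j) (p l) (p m) / (orient (p i) (p j) (p l) * orient (p i) (p j) (p m))
          = g m - g l"
        unfolding g_def by (rule gsel_diff) (use oc0 ol om in auto)
      ultimately show False using gmin[OF m(1)] by simp
    qed
  qed
  define S1 where "S1 = S \<inter> between n i l"
  define S2 where "S2 = S \<inter> between n l j"
  have S1b: "\<And>x. x \<in> S1 \<Longrightarrow> x \<in> S \<and> x \<in> {1..n} \<and> cyc_ccw i x l"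
    unfolding S1_def using between_iff[OF il(1)] by auto
  have S2b: "\<And>x. x \<in> S2 \<Longrightarrow> x \<in> S \<and> x \<in> {1..n} \<and> cyc_ccw l x j"
    unfolding S2_def using between_iff[OF il(2)] by auto
  have j0: "j \<noteq> 0" "i \<noteq> 0" using cf by auto
  have f1: "feas n p i l j S1"
    unfolding feas_def
  proof (intro conjI)
    show "S1 \<subseteq> between n i l" unfolding S1_def by blast
    show "\<forall>x\<in>S1. p x \<notin> Dreg p i l j"
    proof
      fix x assume x: "x \<in> S1"
      hence "x \<noteq> l" using S1b[OF x] unfolding cyc_ccw_def by auto
      hence "inc (p i) (p l) (p j) (p x) < 0" using key S1b[OF x] by blast
      then show "p x \<notin> Dreg p i l j" using disk_out[OF oilj] Dreg_disk[OF j0(1)] by simp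
    qed
    show "indep p (S1 \<union> {i, l})"
      by (rule indep_mono[OF indS]) (use lS S1b in auto)
  qed
  have f2: "feas n p l j i S2"
    unfolding feas_def
  proof (intro conjI)
    show "S2 \<subseteq> between n l j" unfolding S2_def by blast
    show "\<forall>x\<in>S2. p x \<notin> Dreg p l j i"
    proof
      fix x assume x: "x \<in> S2"
      hence "x \<noteq> l" using S2b[OF x] unfolding cyc_ccw_def by auto
      hence "inc (p i) (p l) (p j) (p x) < 0" using key S2b[OF x] by blast
      hence "inc (p l) (p j) (p i) (p x) < 0" by (simp add: inc_cyc)
      then show "p x \<notin> Dreg p l j i" using disk_out[OF olji] Dreg_disk[OF j0(2)] by simp
    qed
    show "indep p (S2 \<union> {l, j})"
      by (rule indep_mono[OF indS]) (use lS S2b in auto)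
  qed
  have Seq: "S = S1 \<union> S2 \<union> {l}"
  proof
    show "S1 \<union> S2 \<union> {l} \<subseteq> S" using S1b S2b lS by auto
    show "S \<subseteq> S1 \<union> S2 \<union> {l}"
    proof
      fix x assume x: "x \<in> S"
      have "x = l \<or> cyc_ccw i x l \<or> cyc_ccw l x j" using Sb[OF x] lb(2) by (auto simp: cyc_ccw_def)
      then show "x \<in> S1 \<union> S2 \<union> {l}"
        unfolding S1_def S2_def using x Sb[OF x] between_iff[OF il(1)] between_iff[OF il(2)] by auto
    qed
  qed
  have fin1: "finite S1" "finite S2" using finS unfolding S1_def S2_def by auto
  have disj: "S1 \<inter> S2 = {}"
    using S1b S2b lb(2) by (fastforce simp: cyc_ccw_def)
  have lS12: "l \<notin> S1 \<union> S2" using S1b S2b by (fastforce simp: cyc_ccw_def)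
  have "sum w S = sum w S1 + sum w S2 + w l"
    by (subst Seq) (use fin1 disj lS12 in \<open>simp add: sum.union_disjoint\<close>)
  also have "\<dots> \<le> fopt n p w i l j + fopt n p w l j i + w l"
    using fopt_ge[OF _ f1, of w] fopt_ge[OF _ f2, of w] dli by (simp add: dist_commute add_mono)
  finally show ?thesis using lPk by blast
qed

theorem lemma20:
  fixes n :: nat and p :: "nat \<Rightarrow> complex" and w :: "nat \<Rightarrow> real" and i j k :: nat
  assumes "good_config n p"
    and "\<forall>m\<in>{1..n}. w m > 0"
    and "canonical n p i j k"
  shows "fopt n p w i j k =
           (if Pk n p i j k \<noteq> {}
            then Max ((\<lambda>l. fopt n p w i l j + fopt n p w l j i + w l) ` Pk n p i j k)
            else 0)"
proof -
  note G = assms(1) and W = assms(2) and C = assms(3)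
  note cf = canon_facts[OF C]
  obtain S where fS: "feas n p i j k S" and eq: "fopt n p w i j k = sum w S"
    using fopt_obtain[OF cf(3)] by metis
  define F where "F l = fopt n p w i l j + fopt n p w l j i + w l" for l
  show ?thesis
  proof (cases "Pk n p i j k = {}")
    case True
    have "S = {}"
    proof (rule ccontr)
      assume "S \<noteq> {}"
      then show False using split_lemma[OF G C fS, of w] True by auto
    qed
    then show ?thesis using eq True by simp
  next
    case False
    have finP: "finite (Pk n p i j k)"
      using between_sub[of n i j] finite_subset[of "Pk n p i j k" "{1..n}"] unfolding Pk_def by auto
    have Fpos: "F l > 0" if l: "l \<in> Pk n p i j k" for l
    proof -
      note lf = Pk_facts[OF C l]
      have "fopt n p w i l j \<ge> 0" "fopt n p w l j i \<ge> 0"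
        using fopt_nonneg lf by auto
      moreover have "w l > 0" using W lf(1) by auto
      ultimately show ?thesis unfolding F_def by simp
    qed
    have le1: "fopt n p w i j k \<le> Max (F ` Pk n p i j k)"
    proof (cases "S = {}")
      case True
      obtain l0 where l0: "l0 \<in> Pk n p i j k" using False by auto
      have "fopt n p w i j k = 0" using eq True by simp
      also have "0 < F l0" by (rule Fpos[OF l0])
      also have "F l0 \<le> Max (F ` Pk n p i j k)" using finP l0 by simp
      finally show ?thesis by simp
    next
      case nS: False
      obtain l where l: "l \<in> Pk n p i j k" and le: "sum w S \<le> F l"
        using split_lemma[OF G C fS nS, of w] unfolding F_def by blast
      have "F l \<le> Max (F ` Pk n p i j k)" using finP l by simp
      then show ?thesis using eq le by simp
    qed
    have le2: "Max (F ` Pk n p i j k) \<le> fopt n p w i j k"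
      using finP False combine[OF G C] unfolding F_def by (simp add: Max_le_iff)
    show ?thesis using le1 le2 False unfolding F_def by simp
  qed
qed

end
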